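(* Under the standing assumptions, if $J_g\neq\{0\}$ for every $g\in\mathcal G$, then the Galois map $\theta:H\mapsto R^{\beta_H}$, from the set of wide subgroupoids of $\mathcal G$ to the set of subalgebras of $R$ containing $R^\beta$, is injective.
   Context: All rings and algebras are associative and unital. A groupoid is a nonempty set $\mathcal G$ with a partially defined associative multiplication in which every $g$ has an inverse $g^{-1}$, a left identity $r(g)=gg^{-1}$ and a right identity $d(g)=g^{-1}g$; $gh$ is defined iff $d(g)=r(h)$; $\mathcal G_0$ is the set of identities. A subgroupoid is a nonempty subset closed under inverses and defined products; it is wide if it contains $\mathcal G_0$. Standing assumptions: $K$ commutative ring, $R$ a $K$-algebra, $\mathcal G$ a finite groupoid, $\beta=(\{E_g\},\{\beta_g\})$ a unital action of $\mathcal G$ on $R$: $E_g=E_{r(g)}$ is an ideal of $R$, unital with identity $1_g$ (so $1_{g^{-1}}=1_{d(g)}$), $\beta_g:E_{g^{-1}}\to E_g$ a $K$-algebra isomorphism, $\beta_e=\mathrm{id}_{E_e}$ for $e\in\mathcal G_0$, $\beta_g\beta_h(x)=\beta_{gh}(x)$ whenever $d(g)=r(h)$, $x\in E_{h^{-1}}$; $R=\bigoplus_{e\in\mathcal G_0}E_e$; and $R$ is a $\beta$-Galois extension of $R^\beta$: there exist $x_i,y_i\in R$ ($1\le i\le m$) with $\sum_i x_i\beta_g(y_i1_{g^{-1}})=1_g$ if $g\in\mathcal G_0$ and $=0$ otherwise. For a subgroupoid $H$, $R^{\beta_H}=\{r\in R:\beta_h(r1_{h^{-1}})=r1_h\ \forall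 h\in H\}$, and $R^\beta=R^{\beta_{\mathcal G}}$. For $g\in\mathcal G$, $J_g=\{r\in E_g: r\beta_g(x1_{g^{-1}})=xr\ \forall x\in R\}$. *)

theory Defs
  imports Main
begin

text \<open>A groupoid: a nonempty carrier G with a multiplication gmul (meaningful only
  when d g = r h) and an inversion ginv.\<close>

definition gr :: "('g \<Rightarrow> 'g \<Rightarrow> 'g) \<Rightarrow> ('g \<Rightarrow> 'g) \<Rightarrow> 'g \<Rightarrow> 'g" where
  "gr gmul ginv g = gmul g (ginv g)"

definition gd :: "('g \<Rightarrow> 'g \<Rightarrow> 'g) \<Rightarrow> ('g \<Rightarrow> 'g) \<Rightarrow> 'g \<Rightarrow> 'g" where
  "gd gmul ginv g = gmul (ginv g) g"

definition groupoid :: "'g set \<Rightarrow> ('g \<Rightarrow> 'g \<Rightarrow> 'g) \<Rightarrow> ('g \<Rightarrow> 'g) \<Rightarrow> bool" where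
  "groupoid G gmul ginv \<longleftrightarrow>
     G \<noteq> {} \<and>
     (\<forall>g\<in>G. ginv g \<in> G \<and> ginv (ginv g) = g) \<and>
     (\<forall>g\<in>G. \<forall>h\<in>G. gd gmul ginv g = gr gmul ginv h \<longrightarrow>
         gmul g h \<in> G \<and> gr gmul ginv (gmul g h) = gr gmul ginv g \<and>
         gd gmul ginv (gmul g h) = gd gmul ginv h) \<and>
     (\<forall>g\<in>G. \<forall>h\<in>G. \<forall>k\<in>G. gd gmul ginv g = gr gmul ginv h \<longrightarrow> gd gmul ginv h = gr gmul ginv k \<longrightarrow>
         gmul (gmul g h) k = gmul g (gmul h k)) \<and>
     (\<forall>g\<in>G. gmul (gr gmul ginv g) g = g \<and> gmul g (gd gmul ginv g) = g)"

definition gidents :: "'g set \<Rightarrow> ('g \<Rightarrow> 'g \<Rightarrow> 'g) \<Rightarrow> ('g \<Rightarrow> 'g) \<Rightarrow> 'g set" where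
  "gidents G gmul ginv = {gd gmul ginv g | g. g \<in> G}"

definition subgroupoid :: "'g set \<Rightarrow> ('g \<Rightarrow> 'g \<Rightarrow> 'g) \<Rightarrow> ('g \<Rightarrow> 'g) \<Rightarrow> 'g set \<Rightarrow> bool" where
  "subgroupoid G gmul ginv H \<longleftrightarrow> H \<noteq> {} \<and> H \<subseteq> G \<and>
     (\<forall>h\<in>H. ginv h \<in> H) \<and>
     (\<forall>h\<in>H. \<forall>k\<in>H. gd gmul ginv h = gr gmul ginv k \<longrightarrow> gmul h k \<in> H)"

definition wide_subgroupoid :: "'g set \<Rightarrow> ('g \<Rightarrow> 'g \<Rightarrow> 'g) \<Rightarrow> ('g \<Rightarrow> 'g) \<Rightarrow> 'g set \<Rightarrow> bool" where
  "wide_subgroupoid G gmul ginv H \<longleftrightarrow> subgroupoid G gmul ginv H \<and> gidents G gmul ginv \<subseteq> H"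

text \<open>R (the whole type 'r) is a K-algebra via the scalar multiplication smult.\<close>
definition k_algebra :: "('k::comm_ring_1 \<Rightarrow> 'r::ring_1 \<Rightarrow> 'r) \<Rightarrow> bool" where
  "k_algebra smult \<longleftrightarrow>
     (\<forall>a b x. smult (a + b) x = smult a x + smult b x) \<and>
     (\<forall>a x y. smult a (x + y) = smult a x + smult a y) \<and>
     (\<forall>a b x. smult (a * b) x = smult a (smult b x)) \<and>
     (\<forall>x. smult 1 x = x) \<and>
     (\<forall>a x y. smult a (x * y) = smult a x * y \<and> smult a (x * y) = x * smult a y)"

definition ideal_of :: "'r::ring_1 set \<Rightarrow> bool" where
  "ideal_of I \<longleftrightarrow> 0 \<in> I \<and> (\<forall>x\<in>I. \<forall>y\<in>I. x + y \<in> I) \<and> (\<forall>x\<in>I. - x \<in> I) \<and>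
     (\<forall>x\<in>I. \<forall>r. r * x \<in> I \<and> x * r \<in> I)"

text \<open>A unital action beta = ({E_g},{beta_g}) of the groupoid on R; u g is the identity 1_g of E_g.\<close>
definition unital_action ::
  "'g set \<Rightarrow> ('g \<Rightarrow> 'g \<Rightarrow> 'g) \<Rightarrow> ('g \<Rightarrow> 'g) \<Rightarrow> ('k::comm_ring_1 \<Rightarrow> 'r::ring_1 \<Rightarrow> 'r)
   \<Rightarrow> ('g \<Rightarrow> 'r set) \<Rightarrow> ('g \<Rightarrow> 'r) \<Rightarrow> ('g \<Rightarrow> 'r \<Rightarrow> 'r) \<Rightarrow> bool" where
  "unital_action G gmul ginv smult E u \<beta> \<longleftrightarrow>
     (\<forall>g\<in>G. E g = E (gr gmul ginv g)) \<and>
     (\<forall>g\<in>G. ideal_of (E g)) \<and>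
     (\<forall>g\<in>G. u g \<in> E g \<and> (\<forall>x\<in>E g. u g * x = x \<and> x * u g = x)) \<and>
     (\<forall>g\<in>G. bij_betw (\<beta> g) (E (ginv g)) (E g) \<and>
        (\<forall>x\<in>E (ginv g). \<forall>y\<in>E (ginv g).
            \<beta> g (x + y) = \<beta> g x + \<beta> g y \<and> \<beta> g (x * y) = \<beta> g x * \<beta> g y) \<and>
        (\<forall>a. \<forall>x\<in>E (ginv g). \<beta> g (smult a x) = smult a (\<beta> g x)) \<and>
        \<beta> g (u (ginv g)) = u g) \<and>
     (\<forall>e\<in>gidents G gmul ginv. \<forall>x\<in>E e. \<beta> e x = x) \<and>
     (\<forall>g\<in>G. \<forall>h\<in>G. gd gmul ginv g = gr gmul ginv h \<longrightarrow>
        (\<forall>x\<in>E (ginv h). \<beta> g (\<beta> h x) = \<beta> (gmul g h) x))"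

definition direct_sum_decomp :: "'g set \<Rightarrow> ('g \<Rightarrow> 'r::ring_1 set) \<Rightarrow> bool" where
  "direct_sum_decomp G0 E \<longleftrightarrow>
     (\<forall>x. \<exists>f. (\<forall>e\<in>G0. f e \<in> E e) \<and> x = (\<Sum>e\<in>G0. f e)) \<and>
     (\<forall>f. (\<forall>e\<in>G0. f e \<in> E e) \<and> (\<Sum>e\<in>G0. f e) = 0 \<longrightarrow> (\<forall>e\<in>G0. f e = 0))"

definition galois_ext ::
  "'g set \<Rightarrow> ('g \<Rightarrow> 'g \<Rightarrow> 'g) \<Rightarrow> ('g \<Rightarrow> 'g) \<Rightarrow> ('g \<Rightarrow> 'r::ring_1) \<Rightarrow> ('g \<Rightarrow> 'r \<Rightarrow> 'r) \<Rightarrow> bool" where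
  "galois_ext G gmul ginv u \<beta> \<longleftrightarrow>
     (\<exists>(m::nat) x y. \<forall>g\<in>G.
        (\<Sum>i\<in>{1..m}. x i * \<beta> g (y i * u (ginv g))) =
          (if g \<in> gidents G gmul ginv then u g else 0))"

definition fixed_ring :: "('g \<Rightarrow> 'g) \<Rightarrow> ('g \<Rightarrow> 'r::ring_1) \<Rightarrow> ('g \<Rightarrow> 'r \<Rightarrow> 'r) \<Rightarrow> 'g set \<Rightarrow> 'r set" where
  "fixed_ring ginv u \<beta> H = {r. \<forall>h\<in>H. \<beta> h (r * u (ginv h)) = r * u h}"

definition Jset :: "('g \<Rightarrow> 'g) \<Rightarrow> ('g \<Rightarrow> 'r::ring_1 set) \<Rightarrow> ('g \<Rightarrow> 'r) \<Rightarrow> ('g \<Rightarrow> 'r \<Rightarrow> 'r) \<Rightarrow> 'g \<Rightarrow> 'r set" where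
  "Jset ginv E u \<beta> g = {r \<in> E g. \<forall>x. r * \<beta> g (x * u (ginv g)) = x * r}"

end

theory Submission imports Defs begin

locale gctx =
  fixes G :: "'g set" and gmul :: "'g \<Rightarrow> 'g \<Rightarrow> 'g" and ginv :: "'g \<Rightarrow> 'g"
    and smult :: "'k::comm_ring_1 \<Rightarrow> 'r::ring_1 \<Rightarrow> 'r"
    and E :: "'g \<Rightarrow> 'r set" and u :: "'g \<Rightarrow> 'r" and \<beta> :: "'g \<Rightarrow> 'r \<Rightarrow> 'r"
  assumes grp: "groupoid G gmul ginv" and fin: "finite G"
    and act: "unital_action G gmul ginv smult E u \<beta>"
    and dsum: "direct_sum_decomp (gidents G gmul ginv) E"
begin

abbreviation "rr \<equiv> gr gmul ginv"
abbreviation "dd \<equiv> gd gmul ginv"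
abbreviation "G0 \<equiv> gidents G gmul ginv"

lemma inv_G: "g \<in> G \<Longrightarrow> ginv g \<in> G" using grp unfolding groupoid_def by blast
lemma inv_inv: "g \<in> G \<Longrightarrow> ginv (ginv g) = g" using grp unfolding groupoid_def by blast
lemma mul_G: "g \<in> G \<Longrightarrow> h \<in> G \<Longrightarrow> dd g = rr h \<Longrightarrow> gmul g h \<in> G"
  using grp unfolding groupoid_def by blast
lemma r_mul: "g \<in> G \<Longrightarrow> h \<in> G \<Longrightarrow> dd g = rr h \<Longrightarrow> rr (gmul g h) = rr g"
  using grp unfolding groupoid_def by blast
lemma d_mul: "g \<in> G \<Longrightarrow> h \<in> G \<Longrightarrow> dd g = rr h \<Longrightarrow> dd (gmul g h) = dd h"
  using grp unfolding groupoid_def by blast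
lemma assoc: "g \<in> G \<Longrightarrow> h \<in> G \<Longrightarrow> k \<in> G \<Longrightarrow> dd g = rr h \<Longrightarrow> dd h = rr k \<Longrightarrow>
   gmul (gmul g h) k = gmul g (gmul h k)"
  using grp unfolding groupoid_def by blast
lemma lid: "g \<in> G \<Longrightarrow> gmul (rr g) g = g" using grp unfolding groupoid_def by blast
lemma rid: "g \<in> G \<Longrightarrow> gmul g (dd g) = g" using grp unfolding groupoid_def by blast

lemma r_inv: "g \<in> G \<Longrightarrow> rr (ginv g) = dd g" by (simp add: gr_def gd_def inv_inv)
lemma d_inv: "g \<in> G \<Longrightarrow> dd (ginv g) = rr g" by (simp add: gr_def gd_def inv_inv)
lemma r_G: "g \<in> G \<Longrightarrow> rr g \<in> G"
  using mul_G[of g "ginv g"] inv_G r_inv unfolding gr_def by simp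
lemma d_G: "g \<in> G \<Longrightarrow> dd g \<in> G"
  using mul_G[of "ginv g" g] inv_G d_inv unfolding gd_def by simp
lemma r_r: "g \<in> G \<Longrightarrow> rr (rr g) = rr g"
  using r_mul[of g "ginv g"] inv_G r_inv by (simp add: gr_def[of _ _ g])
lemma d_r: "g \<in> G \<Longrightarrow> dd (rr g) = rr g"
  using d_mul[of g "ginv g"] inv_G r_inv d_inv by (simp add: gr_def[of _ _ g])
lemma r_d: "g \<in> G \<Longrightarrow> rr (dd g) = dd g"
  using r_mul[of "ginv g" g] inv_G r_inv d_inv by (simp add: gd_def[of _ _ g])
lemma d_d: "g \<in> G \<Longrightarrow> dd (dd g) = dd g"
  using d_mul[of "ginv g" g] inv_G r_inv d_inv by (simp add: gd_def[of _ _ g])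

lemma G0_G: "e \<in> G0 \<Longrightarrow> e \<in> G" unfolding gidents_def using d_G by auto
lemma d_G0: "g \<in> G \<Longrightarrow> dd g \<in> G0" unfolding gidents_def by auto
lemma r_G0: "g \<in> G \<Longrightarrow> rr g \<in> G0" using d_G0[of "ginv g"] inv_G d_inv by simp
lemma G0_r: "e \<in> G0 \<Longrightarrow> rr e = e" unfolding gidents_def using r_d by auto
lemma G0_d: "e \<in> G0 \<Longrightarrow> dd e = e" unfolding gidents_def using d_d by auto

lemma L5: assumes "g \<in> G" "h \<in> G" "rr g = rr h" "gmul (ginv g) h \<in> G0" shows "h = g"
proof -
  let ?z = "gmul (ginv g) h"
  have c: "dd (ginv g) = rr h" using assms d_inv by simp
  have "rr ?z = dd g" using r_mul[OF inv_G[OF assms(1)] assms(2) c] r_inv assms by simp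
  hence z: "?z = dd g" using G0_r assms(4) by simp
  have "gmul g ?z = gmul (gmul g (ginv g)) h"
    using assoc[OF assms(1) inv_G[OF assms(1)] assms(2)] r_inv assms c by simp
  also have "\<dots> = h" using lid assms by (simp add: gr_def[symmetric])
  finally show ?thesis using z rid assms by simp
qed

lemma L6: "k \<in> G \<Longrightarrow> h \<in> G \<Longrightarrow> dd k = rr h \<Longrightarrow> gmul (ginv k) (gmul k h) = h"
  using assoc[of "ginv k" k h] inv_G d_inv lid by (simp add: gd_def[symmetric])
lemma L7: "k \<in> G \<Longrightarrow> h \<in> G \<Longrightarrow> rr k = rr h \<Longrightarrow> gmul k (gmul (ginv k) h) = h"
  using assoc[of k "ginv k" h] inv_G d_inv r_inv lid by (simp add: gr_def[symmetric])


lemma E_r: "g \<in> G \<Longrightarrow> E g = E (rr g)" using act unfolding unital_action_def by blast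
lemma ideal: "g \<in> G \<Longrightarrow> ideal_of (E g)" using act unfolding unital_action_def by blast
lemma E0: "g \<in> G \<Longrightarrow> 0 \<in> E g" using ideal unfolding ideal_of_def by blast
lemma E_add: "g \<in> G \<Longrightarrow> x \<in> E g \<Longrightarrow> y \<in> E g \<Longrightarrow> x + y \<in> E g"
  using ideal unfolding ideal_of_def by blast
lemma E_neg: "g \<in> G \<Longrightarrow> x \<in> E g \<Longrightarrow> - x \<in> E g"
  using ideal unfolding ideal_of_def by blast
lemma E_ml: "g \<in> G \<Longrightarrow> x \<in> E g \<Longrightarrow> r * x \<in> E g"
  using ideal unfolding ideal_of_def by blast
lemma E_mr: "g \<in> G \<Longrightarrow> x \<in> E g \<Longrightarrow> x * r \<in> E g"
  using ideal unfolding ideal_of_def by blast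
lemma u_E: "g \<in> G \<Longrightarrow> u g \<in> E g" using act unfolding unital_action_def by blast
lemma u_l: "g \<in> G \<Longrightarrow> x \<in> E g \<Longrightarrow> u g * x = x" using act unfolding unital_action_def by blast
lemma u_r: "g \<in> G \<Longrightarrow> x \<in> E g \<Longrightarrow> x * u g = x" using act unfolding unital_action_def by blast
lemma b_bij: "g \<in> G \<Longrightarrow> bij_betw (\<beta> g) (E (ginv g)) (E g)" using act unfolding unital_action_def by blast
lemma b_E: "g \<in> G \<Longrightarrow> x \<in> E (ginv g) \<Longrightarrow> \<beta> g x \<in> E g" using b_bij bij_betwE by blast
lemma b_add: "g \<in> G \<Longrightarrow> x \<in> E (ginv g) \<Longrightarrow> y \<in> E (ginv g) \<Longrightarrow> \<beta> g (x + y) = \<beta> g x + \<beta> g y"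
  using act unfolding unital_action_def by blast
lemma b_u: "g \<in> G \<Longrightarrow> \<beta> g (u (ginv g)) = u g" using act unfolding unital_action_def by blast
lemma b_id: "e \<in> G0 \<Longrightarrow> x \<in> E e \<Longrightarrow> \<beta> e x = x" using act unfolding unital_action_def by blast
lemma b_comp: "g \<in> G \<Longrightarrow> h \<in> G \<Longrightarrow> dd g = rr h \<Longrightarrow> x \<in> E (ginv h) \<Longrightarrow> \<beta> g (\<beta> h x) = \<beta> (gmul g h) x"
  using act unfolding unital_action_def by blast

lemma E_inv: "g \<in> G \<Longrightarrow> E (ginv g) = E (dd g)" using E_r[OF inv_G] r_inv by simp
lemma u_eq: "a \<in> G \<Longrightarrow> b \<in> G \<Longrightarrow> E a = E b \<Longrightarrow> u a = u b"
  by (metis u_E u_l u_r)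

lemma b0: "g \<in> G \<Longrightarrow> \<beta> g 0 = 0"
  using b_add[of g 0 0] E0[OF inv_G] by simp

lemma sum_E: assumes "g \<in> G" "finite S" shows "(\<forall>s\<in>S. f s \<in> E g) \<Longrightarrow> (\<Sum>s\<in>S. f s) \<in> E g"
  using assms(2) by (induction S rule: finite_induct) (auto intro: E_add E0 assms(1))

lemma b_sum: assumes "g \<in> G" "finite S" shows "(\<forall>s\<in>S. f s \<in> E (ginv g)) \<Longrightarrow> \<beta> g (\<Sum>s\<in>S. f s) = (\<Sum>s\<in>S. \<beta> g (f s))"
  using assms(2)
proof (induction S rule: finite_induct)
  case empty then show ?case using b0 assms(1) by simp
next
  case (insert x F)
  have s: "(\<Sum>s\<in>F. f s) \<in> E (ginv g)"
    using insert.prems insert.hyps(1) sum_E[OF inv_G[OF assms(1)], of F f] by blast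
  show ?case using insert b_add[OF assms(1) _ s, of "f x"] by simp
qed


lemma disj: assumes "e \<in> G0" "f \<in> G0" "e \<noteq> f" "z \<in> E e" "z \<in> E f" shows "z = 0"
proof -
  let ?F = "\<lambda>x. (if x = e then z else 0) + (if x = f then - z else 0)"
  have fin0: "finite G0" unfolding gidents_def using fin by simp
  have A1: "\<forall>x\<in>G0. ?F x \<in> E x" using assms G0_G E0 E_neg by auto
  have A2: "(\<Sum>x\<in>G0. ?F x) = 0" using fin0 assms by (simp add: sum.distrib)
  have D: "\<And>F. (\<forall>e\<in>G0. F e \<in> E e) \<Longrightarrow> sum F G0 = 0 \<Longrightarrow> \<forall>e\<in>G0. F e = 0"
    using dsum unfolding direct_sum_decomp_def by blast
  have "?F e = 0" using D[of ?F, OF A1 A2] assms(1) by blast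
  thus ?thesis using assms(3) by simp
qed

lemma M: assumes "h \<in> G" "k \<in> G" "z \<in> E h" shows "z * u (ginv k) = (if rr h = dd k then z else 0)"
proof (cases "rr h = dd k")
  case True
  hence "E h = E (ginv k)" using E_r assms E_inv by simp
  then show ?thesis using True u_r[OF inv_G[OF assms(2)]] assms by simp
next
  case False
  have "z * u (ginv k) \<in> E (rr h)" using E_mr assms E_r by auto
  moreover have "z * u (ginv k) \<in> E (dd k)" using E_ml u_E inv_G assms E_inv by metis
  ultimately show ?thesis using disj[OF r_G0 d_G0] assms False by auto
qed

lemma M2: assumes "h \<in> G" "k \<in> G" "z \<in> E h" shows "z * u k = (if rr h = rr k then z else 0)"
  using M[OF assms(1) inv_G[OF assms(2)] assms(3)] inv_inv assms d_inv by simp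


definition tr :: "'g set \<Rightarrow> 'r \<Rightarrow> 'r" where "tr H r = (\<Sum>h\<in>H. \<beta> h (r * u (ginv h)))"

lemma F_E: "h \<in> G \<Longrightarrow> \<beta> h (r * u (ginv h)) \<in> E h"
  using b_E E_ml u_E inv_G by blast

lemma wideG: "wide_subgroupoid G gmul ginv H \<Longrightarrow> H \<subseteq> G"
  unfolding wide_subgroupoid_def subgroupoid_def by blast
lemma wide0: "wide_subgroupoid G gmul ginv H \<Longrightarrow> G0 \<subseteq> H"
  unfolding wide_subgroupoid_def by blast
lemma wide_inv: "wide_subgroupoid G gmul ginv H \<Longrightarrow> h \<in> H \<Longrightarrow> ginv h \<in> H"
  unfolding wide_subgroupoid_def subgroupoid_def by blast
lemma wide_mul: "wide_subgroupoid G gmul ginv H \<Longrightarrow> h \<in> H \<Longrightarrow> k \<in> H \<Longrightarrow> dd h = rr k \<Longrightarrow> gmul h k \<in> H"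
  unfolding wide_subgroupoid_def subgroupoid_def by blast

lemma tr_mul_inv: assumes "wide_subgroupoid G gmul ginv H" "k \<in> G"
  shows "tr H r * u (ginv k) = (\<Sum>h\<in>{h\<in>H. rr h = dd k}. \<beta> h (r * u (ginv h)))"
proof -
  have HG: "H \<subseteq> G" using wideG assms by blast
  have fH: "finite H" using fin HG finite_subset by blast
  have "tr H r * u (ginv k) = (\<Sum>h\<in>H. \<beta> h (r * u (ginv h)) * u (ginv k))"
    by (simp add: tr_def sum_distrib_right)
  also have "\<dots> = (\<Sum>h\<in>H. if rr h = dd k then \<beta> h (r * u (ginv h)) else 0)"
    using M[OF _ assms(2) F_E] HG by (intro sum.cong) auto
  also have "\<dots> = (\<Sum>h\<in>{h\<in>H. rr h = dd k}. \<beta> h (r * u (ginv h)))"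
    using fH by (simp add: sum.inter_filter)
  finally show ?thesis .
qed

lemma tr_mul: assumes "wide_subgroupoid G gmul ginv H" "k \<in> G"
  shows "tr H r * u k = (\<Sum>h\<in>{h\<in>H. rr h = rr k}. \<beta> h (r * u (ginv h)))"
proof -
  have HG: "H \<subseteq> G" using wideG assms by blast
  have fH: "finite H" using fin HG finite_subset by blast
  have "tr H r * u k = (\<Sum>h\<in>H. \<beta> h (r * u (ginv h)) * u k)"
    by (simp add: tr_def sum_distrib_right)
  also have "\<dots> = (\<Sum>h\<in>H. if rr h = rr k then \<beta> h (r * u (ginv h)) else 0)"
    using M2[OF _ assms(2) F_E] HG by (intro sum.cong) auto
  also have "\<dots> = (\<Sum>h\<in>{h\<in>H. rr h = rr k}. \<beta> h (r * u (ginv h)))"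
    using fH by (simp add: sum.inter_filter)
  finally show ?thesis .
qed

lemma tr_fixed: assumes W: "wide_subgroupoid G gmul ginv H" and kH: "k \<in> H"
  shows "\<beta> k (tr H r * u (ginv k)) = tr H r * u k"
proof -
  have HG: "H \<subseteq> G" using wideG assms by blast
  have fH: "finite H" using fin HG finite_subset by blast
  have k: "k \<in> G" using kH HG by blast
  let ?A = "{h\<in>H. rr h = dd k}" and ?B = "{h\<in>H. rr h = rr k}"
  have "\<beta> k (tr H r * u (ginv k)) = (\<Sum>h\<in>?A. \<beta> k (\<beta> h (r * u (ginv h))))"
    unfolding tr_mul_inv[OF W k]
  proof (rule b_sum[OF k])
    show "finite ?A" using fH by simp
    show "\<forall>s\<in>?A. \<beta> s (r * u (ginv s)) \<in> E (ginv k)"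
    proof
      fix s assume s: "s \<in> ?A"
      hence sG: "s \<in> G" using HG by auto
      have "E s = E (ginv k)" using E_r[OF sG] E_inv[OF k] s by simp
      thus "\<beta> s (r * u (ginv s)) \<in> E (ginv k)" using F_E[OF sG] by simp
    qed
  qed
  also have "\<dots> = (\<Sum>h\<in>?A. \<beta> (gmul k h) (r * u (ginv (gmul k h))))"
  proof (rule sum.cong)
    fix h assume h: "h \<in> ?A"
    hence hG: "h \<in> G" and c: "dd k = rr h" using HG by auto
    have kh: "gmul k h \<in> G" using mul_G[OF k hG c] .
    have "E (ginv (gmul k h)) = E (ginv h)"
      using E_inv[OF kh] E_inv[OF hG] d_mul[OF k hG c] by simp
    hence ue: "u (ginv h) = u (ginv (gmul k h))" using u_eq inv_G hG kh by metis
    show "\<beta> k (\<beta> h (r * u (ginv h))) = \<beta> (gmul k h) (r * u (ginv (gmul k h)))"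
      using b_comp[OF k hG c] E_ml u_E inv_G hG ue by metis
  qed simp
  also have "\<dots> = (\<Sum>h\<in>gmul k ` ?A. \<beta> h (r * u (ginv h)))"
  proof -
    have "inj_on (gmul k) ?A"
    proof (rule inj_onI)
      fix x y assume "x \<in> ?A" "y \<in> ?A" "gmul k x = gmul k y"
      thus "x = y" using L6[OF k, of x] L6[OF k, of y] HG by auto
    qed
    thus ?thesis by (simp add: sum.reindex)
  qed
  also have "gmul k ` ?A = ?B"
  proof
    show "gmul k ` ?A \<subseteq> ?B"
      using wide_mul[OF W kH] r_mul[OF k] HG by auto
  next
    show "?B \<subseteq> gmul k ` ?A"
    proof
      fix h assume h: "h \<in> ?B"
      hence hG: "h \<in> G" using HG by auto
      have c: "dd (ginv k) = rr h" using d_inv k h by simp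
      have "ginv k \<in> H" using wide_inv W kH by blast
      hence "gmul (ginv k) h \<in> ?A"
        using wide_mul[OF W _ _ c] h r_mul[OF inv_G[OF k] hG c] r_inv k by auto
      moreover have "gmul k (gmul (ginv k) h) = h" using L7 k hG h by auto
      ultimately show "h \<in> gmul k ` ?A" by force
    qed
  qed
  finally show ?thesis using tr_mul[OF W k] by simp
qed


lemma key: assumes W: "wide_subgroupoid G gmul ginv H" and g: "g \<in> G" and gH: "g \<notin> H"
  and gal: "galois_ext G gmul ginv u \<beta>"
  and fx: "\<forall>s\<in>fixed_ring ginv u \<beta> H. \<beta> g (s * u (ginv g)) = s * u g"
  shows "u (dd g) = 0"
proof -
  obtain m :: nat and x y where gl0: "\<forall>g\<in>G.
     (\<Sum>i\<in>{1..m}. x i * \<beta> g (y i * u (ginv g))) = (if g \<in> G0 then u g else 0)"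
    using gal unfolding galois_ext_def by blast
  have gl: "\<And>g. g \<in> G \<Longrightarrow>
     (\<Sum>i\<in>{1..m}. x i * \<beta> g (y i * u (ginv g))) = (if g \<in> G0 then u g else 0)"
    using gl0 by blast
  have HG: "H \<subseteq> G" using wideG W by blast
  have fH: "finite H" using fin HG finite_subset by blast
  let ?A = "{h\<in>H. rr h = dd g}" and ?B = "{h\<in>H. rr h = rr g}"
  let ?z = "\<lambda>h. gmul (ginv g) h"
  have fx2: "\<beta> g (tr H r * u (ginv g)) = tr H r * u g" for r
  proof -
    have "tr H r \<in> fixed_ring ginv u \<beta> H" using tr_fixed[OF W] unfolding fixed_ring_def by blast
    thus ?thesis using fx by blast
  qed
  have P: "tr H r * u (ginv g) = \<beta> (ginv g) (tr H r * u g)" for r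
  proof -
    have p: "tr H r * u (ginv g) \<in> E (ginv g)" using E_ml u_E inv_G g by blast
    have "\<beta> (ginv g) (\<beta> g (tr H r * u (ginv g))) = \<beta> (dd g) (tr H r * u (ginv g))"
      using b_comp[OF inv_G[OF g] g d_inv[OF g] p] by (simp add: gd_def)
    also have "\<dots> = tr H r * u (ginv g)" using b_id[OF d_G0[OF g]] p E_inv[OF g] by simp
    finally show ?thesis using fx2 by simp
  qed
  have Q: "\<beta> (ginv g) (tr H r * u g) = (\<Sum>h\<in>?B. \<beta> (?z h) (r * u (ginv (?z h))))" for r
  proof -
    have "\<beta> (ginv g) (tr H r * u g) = (\<Sum>h\<in>?B. \<beta> (ginv g) (\<beta> h (r * u (ginv h))))"
      unfolding tr_mul[OF W g]
    proof (rule b_sum[OF inv_G[OF g]])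
      show "finite ?B" using fH by simp
      show "\<forall>s\<in>?B. \<beta> s (r * u (ginv s)) \<in> E (ginv (ginv g))"
      proof
        fix s assume s: "s \<in> ?B"
        hence sG: "s \<in> G" using HG by auto
        have "E s = E (ginv (ginv g))" using E_r[OF sG] E_r[OF g] inv_inv[OF g] s by simp
        thus "\<beta> s (r * u (ginv s)) \<in> E (ginv (ginv g))" using F_E[OF sG] by simp
      qed
    qed
    also have "\<dots> = (\<Sum>h\<in>?B. \<beta> (?z h) (r * u (ginv (?z h))))"
    proof (rule sum.cong)
      fix h assume h: "h \<in> ?B"
      hence hG: "h \<in> G" and c: "dd (ginv g) = rr h" using HG d_inv g by auto
      have kh: "?z h \<in> G" using mul_G[OF inv_G[OF g] hG c] .
      have "E (ginv (?z h)) = E (ginv h)"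
        using E_inv[OF kh] E_inv[OF hG] d_mul[OF inv_G[OF g] hG c] by simp
      hence ue: "u (ginv h) = u (ginv (?z h))" using u_eq inv_G hG kh by metis
      show "\<beta> (ginv g) (\<beta> h (r * u (ginv h))) = \<beta> (?z h) (r * u (ginv (?z h)))"
        using b_comp[OF inv_G[OF g] hG c] E_ml u_E inv_G hG ue by metis
    qed simp
    finally show ?thesis .
  qed
  have "(\<Sum>i\<in>{1..m}. x i * (tr H (y i) * u (ginv g)))
      = (\<Sum>i\<in>{1..m}. x i * \<beta> (ginv g) (tr H (y i) * u g))"
    using P by simp
  moreover have "(\<Sum>i\<in>{1..m}. x i * (tr H (y i) * u (ginv g))) = u (dd g)"
  proof -
    have "(\<Sum>i\<in>{1..m}. x i * (tr H (y i) * u (ginv g)))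
        = (\<Sum>i\<in>{1..m}. \<Sum>h\<in>?A. x i * \<beta> h (y i * u (ginv h)))"
      by (simp add: tr_mul_inv[OF W g] sum_distrib_left)
    also have "\<dots> = (\<Sum>h\<in>?A. \<Sum>i\<in>{1..m}. x i * \<beta> h (y i * u (ginv h)))"
      by (rule sum.swap)
    also have "\<dots> = (\<Sum>h\<in>?A. if h \<in> G0 then u h else 0)"
      using gl HG by (intro sum.cong) auto
    also have "\<dots> = (\<Sum>h\<in>{h\<in>?A. h \<in> G0}. u h)"
      using fH by (auto simp: sum.inter_filter intro!: sum.cong)
    also have "{h\<in>?A. h \<in> G0} = {dd g}"
      using wide0[OF W] d_G0[OF g] r_d[OF g] G0_r by auto
    finally show ?thesis by simp
  qed
  moreover have "(\<Sum>i\<in>{1..m}. x i * \<beta> (ginv g) (tr H (y i) * u g)) = 0"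
  proof -
    have "(\<Sum>i\<in>{1..m}. x i * \<beta> (ginv g) (tr H (y i) * u g))
        = (\<Sum>i\<in>{1..m}. \<Sum>h\<in>?B. x i * \<beta> (?z h) (y i * u (ginv (?z h))))"
      by (simp add: Q sum_distrib_left)
    also have "\<dots> = (\<Sum>h\<in>?B. \<Sum>i\<in>{1..m}. x i * \<beta> (?z h) (y i * u (ginv (?z h))))"
      by (rule sum.swap)
    also have "\<dots> = (\<Sum>h\<in>?B. 0)"
    proof (rule sum.cong)
      fix h assume h: "h \<in> ?B"
      hence hG: "h \<in> G" and c: "dd (ginv g) = rr h" using HG d_inv g by auto
      have kh: "?z h \<in> G" using mul_G[OF inv_G[OF g] hG c] .
      have "?z h \<notin> G0" using L5[OF g hG] h gH by auto
      thus "(\<Sum>i\<in>{1..m}. x i * \<beta> (?z h) (y i * u (ginv (?z h)))) = 0" using gl[OF kh] by simp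
    qed simp
    finally show ?thesis by simp
  qed
  ultimately show ?thesis by simp
qed

end

theorem theorem3p3:
  fixes G :: "'g set" and gmul :: "'g \<Rightarrow> 'g \<Rightarrow> 'g" and ginv :: "'g \<Rightarrow> 'g"
    and smult :: "'k::comm_ring_1 \<Rightarrow> 'r::ring_1 \<Rightarrow> 'r"
    and E :: "'g \<Rightarrow> 'r set" and u :: "'g \<Rightarrow> 'r" and \<beta> :: "'g \<Rightarrow> 'r \<Rightarrow> 'r"
  assumes "groupoid G gmul ginv"
    and "finite G"
    and "k_algebra smult"
    and "unital_action G gmul ginv smult E u \<beta>"
    and "direct_sum_decomp (gidents G gmul ginv) E"
    and "galois_ext G gmul ginv u \<beta>"
    and "\<forall>g\<in>G. Jset ginv E u \<beta> g \<noteq> {0}"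
  shows "inj_on (fixed_ring ginv u \<beta>) {H. wide_subgroupoid G gmul ginv H}"
proof -
  interpret gctx G gmul ginv smult E u \<beta>
    using assms by unfold_locales
  have sub: "H2 \<subseteq> H1" if W1: "wide_subgroupoid G gmul ginv H1" and W2: "wide_subgroupoid G gmul ginv H2"
    and eq: "fixed_ring ginv u \<beta> H1 = fixed_ring ginv u \<beta> H2" for H1 H2
  proof
    fix g assume gH2: "g \<in> H2"
    have g: "g \<in> G" using wideG[OF W2] gH2 by blast
    show "g \<in> H1"
    proof (rule ccontr)
      assume gH1: "g \<notin> H1"
      have "\<forall>s\<in>fixed_ring ginv u \<beta> H1. \<beta> g (s * u (ginv g)) = s * u g"
      proof
        fix s assume "s \<in> fixed_ring ginv u \<beta> H1"
        hence "s \<in> fixed_ring ginv u \<beta> H2" using eq by simp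
        thus "\<beta> g (s * u (ginv g)) = s * u g" using gH2 unfolding fixed_ring_def by simp
      qed
      hence z: "u (dd g) = 0" by (rule key[OF W1 g gH1 assms(6)])
      have "u (ginv g) = u (dd g)" by (rule u_eq[OF inv_G[OF g] d_G[OF g] E_inv[OF g]])
      hence ug: "u g = 0" using b_u[OF g] b0[OF g] z by simp
      have "E g \<subseteq> {0}"
      proof
        fix w assume "w \<in> E g"
        hence "w = u g * w" using u_l[OF g] by simp
        thus "w \<in> {0}" using ug by simp
      qed
      hence "Jset ginv E u \<beta> g \<subseteq> {0}" unfolding Jset_def by auto
      moreover have "0 \<in> Jset ginv E u \<beta> g" unfolding Jset_def using E0[OF g] by simp
      ultimately show False using assms(7) g by blast
    qed
  qed
  show ?thesis
  proof (rule inj_onI)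
    fix H1 H2 assume "H1 \<in> {H. wide_subgroupoid G gmul ginv H}" "H2 \<in> {H. wide_subgroupoid G gmul ginv H}"
      "fixed_ring ginv u \<beta> H1 = fixed_ring ginv u \<beta> H2"
    thus "H1 = H2" using sub[of H1 H2] sub[of H2 H1] by auto
  qed
qed

end
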